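(* Let $X$ be a Polish space and $G$ a closed graph on $X$. Then $P_G$ forces that $\dot K_{gen}$ is a compact $G$-anticlique (a compact subset of $X$ in which no two distinct points are $G$-connected).
   Context: A graph $G$ on $X$ is a symmetric irreflexive relation; it is closed if it is closed in $(X\times X)\setminus$ diagonal. A $G$-anticlique is a set with no two distinct $G$-connected points. The poset $P_G$ consists of all pairs $p=\langle a_p,o_p\rangle$ where $a_p\subset X$ is a finite $G$-anticlique and $o_p\subset X$ is an open set with $a_p\subset o_p$; the order is $q\leq p$ iff $a_p\subset a_q$ and $o_q\subset o_p$. $\dot K_{gen}$ is the $P_G$-name for the closure (in $X$) of the union of the sets $a_p$ for $p$ in the generic filter. *)

theory Defs
  imports "HOL-Analysis.Analysis"
begin

text \<open>The Polish space X is the whole type 'a of class polish_space.\<close>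

definition closed_graph :: "('a::topological_space \<times> 'a) set \<Rightarrow> bool" where
  "closed_graph G \<longleftrightarrow> sym G \<and> G \<inter> Id = {} \<and> closedin (top_of_set (- Id)) G"

definition anticlique :: "('a \<times> 'a) set \<Rightarrow> 'a set \<Rightarrow> bool" where
  "anticlique G A \<longleftrightarrow> (\<forall>x\<in>A. \<forall>y\<in>A. x \<noteq> y \<longrightarrow> (x, y) \<notin> G)"

definition PG :: "('a::topological_space \<times> 'a) set \<Rightarrow> ('a set \<times> 'a set) set" where
  "PG G = {(a, U). finite a \<and> anticlique G a \<and> open U \<and> a \<subseteq> U}"

definition PG_le :: "('a set \<times> 'a set) \<Rightarrow> ('a set \<times> 'a set) \<Rightarrow> bool" where
  "PG_le q p \<longleftrightarrow> fst p \<subseteq> fst q \<and> snd q \<subseteq> snd p"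

definition PG_dense :: "('a::topological_space \<times> 'a) set \<Rightarrow> ('a set \<times> 'a set) set \<Rightarrow> bool" where
  "PG_dense G D \<longleftrightarrow> D \<subseteq> PG G \<and> (\<forall>p\<in>PG G. \<exists>q\<in>D. PG_le q p)"

definition PG_filter :: "('a::topological_space \<times> 'a) set \<Rightarrow> ('a set \<times> 'a set) set \<Rightarrow> bool" where
  "PG_filter G F \<longleftrightarrow> F \<subseteq> PG G \<and> F \<noteq> {}
     \<and> (\<forall>p\<in>F. \<forall>q\<in>PG G. PG_le p q \<longrightarrow> q \<in> F)
     \<and> (\<forall>p\<in>F. \<forall>q\<in>F. \<exists>r\<in>F. PG_le r p \<and> PG_le r q)"

definition K_gen :: "('a::topological_space set \<times> 'a set) set \<Rightarrow> 'a set" where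
  "K_gen F = closure (\<Union>p\<in>F. fst p)"

text \<open>"P_G forces phi(K_gen)" is rendered as: there is a countable family of dense
  subsets of P_G such that every filter meeting all of them satisfies phi.\<close>

definition PG_forces :: "('a::topological_space \<times> 'a) set \<Rightarrow> ('a set \<Rightarrow> bool) \<Rightarrow> bool" where
  "PG_forces G \<phi> \<longleftrightarrow> (\<exists>\<D>. countable \<D> \<and> (\<forall>D\<in>\<D>. PG_dense G D) \<and>
     (\<forall>F. PG_filter G F \<and> (\<forall>D\<in>\<D>. F \<inter> D \<noteq> {}) \<longrightarrow> \<phi> (K_gen F)))"

end

theory Submission
  imports Defs
begin

lemma finite_pos_bound:
  assumes "finite S"
    and "\<And>s. s \<in> S \<Longrightarrow> \<exists>r>0. \<forall>r'. 0 < r' \<and> r' \<le> r \<longrightarrow> P s r'"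
  shows "\<exists>r>(0::real). \<forall>s\<in>S. \<forall>r'. 0 < r' \<and> r' \<le> r \<longrightarrow> P s r'"
  using assms
proof (induction S rule: finite_induct)
  case empty
  then show ?case by (intro exI[of _ 1]) auto
next
  case (insert x F)
  then obtain r1 where r1: "r1 > 0" "\<forall>s\<in>F. \<forall>r'. 0 < r' \<and> r' \<le> r1 \<longrightarrow> P s r'" by blast
  obtain r2 where r2: "r2 > 0" "\<forall>r'. 0 < r' \<and> r' \<le> r2 \<longrightarrow> P x r'" using insert by blast
  show ?case using r1 r2 by (intro exI[of _ "min r1 r2"]) auto
qed

lemma pair_radius:
  fixes G :: "('a::metric_space \<times> 'a) set"
  assumes "closed_graph G" "x \<noteq> y" "(x, y) \<notin> G"
  shows "\<exists>r>0. \<forall>r'. 0 < r' \<and> r' \<le> r \<longrightarrow> (cball x r' \<times> cball y r') \<inter> G = {}"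
proof -
  obtain T where T: "closed T" "G = - Id \<inter> T"
    using assms(1) unfolding closed_graph_def closedin_closed by blast
  have "(x, y) \<in> - T" using T assms by auto
  moreover have "open (- T)" using T by auto
  ultimately obtain A B where AB: "open A" "open B" "(x, y) \<in> A \<times> B" "A \<times> B \<subseteq> - T"
    by (metis open_prod_elim)
  obtain e1 where e1: "e1 > 0" "ball x e1 \<subseteq> A" using AB open_contains_ball by force
  obtain e2 where e2: "e2 > 0" "ball y e2 \<subseteq> B" using AB open_contains_ball by force
  show ?thesis
  proof (intro exI[of _ "min e1 e2 / 2"] conjI allI impI)
    show "0 < min e1 e2 / 2" using e1 e2 by auto
    fix r' assume r': "0 < r' \<and> r' \<le> min e1 e2 / 2"
    have "cball x r' \<subseteq> A" proof -
      have "cball x r' \<subseteq> ball x e1" using e1 r' by (auto simp: subset_iff)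
      then show ?thesis using e1 by blast
    qed
    moreover have "cball y r' \<subseteq> B" proof -
      have "cball y r' \<subseteq> ball y e2" using e2 r' by (auto simp: subset_iff)
      then show ?thesis using e2 by blast
    qed
    ultimately show "(cball x r' \<times> cball y r') \<inter> G = {}" using AB T by blast
  qed
qed

definition Dn :: "('a::metric_space \<times> 'a) set \<Rightarrow> nat \<Rightarrow> ('a set \<times> 'a set) set" where
  "Dn G n = {q \<in> PG G. \<exists>r>0. r \<le> 1 / real (Suc n) \<and> snd q \<subseteq> (\<Union>x\<in>fst q. ball x r) \<and>
      (\<forall>x\<in>fst q. \<forall>y\<in>fst q. x \<noteq> y \<longrightarrow> (cball x r \<times> cball y r) \<inter> G = {})}"

lemma Dn_dense:
  fixes G :: "('a::metric_space \<times> 'a) set"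
  assumes "closed_graph G"
  shows "PG_dense G (Dn G n)"
  unfolding PG_dense_def
proof (intro conjI ballI)
  show "Dn G n \<subseteq> PG G" unfolding Dn_def by auto
  fix p assume p: "p \<in> PG G"
  obtain a U where aU: "p = (a, U)" by force
  have a: "finite a" "anticlique G a" "open U" "a \<subseteq> U" using p aU unfolding PG_def by auto
  have "\<exists>r>(0::real). \<forall>s\<in>(a \<times> a - Id). \<forall>r'. 0 < r' \<and> r' \<le> r \<longrightarrow> (cball (fst s) r' \<times> cball (snd s) r') \<inter> G = {}"
  proof (rule finite_pos_bound)
    show "finite (a \<times> a - Id)" using a by auto
    fix s assume s: "s \<in> a \<times> a - Id"
    then have "fst s \<noteq> snd s" "(fst s, snd s) \<notin> G" using a(2) unfolding anticlique_def by auto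
    then show "\<exists>r>0. \<forall>r'. 0 < r' \<and> r' \<le> r \<longrightarrow> (cball (fst s) r' \<times> cball (snd s) r') \<inter> G = {}"
      using pair_radius[OF assms] by blast
  qed
  then obtain r0 where r0: "r0 > 0" "\<forall>s\<in>(a \<times> a - Id). \<forall>r'. 0 < r' \<and> r' \<le> r0 \<longrightarrow> (cball (fst s) r' \<times> cball (snd s) r') \<inter> G = {}" by blast
  define r where "r = min r0 (1 / real (Suc n))"
  have r: "r > 0" "r \<le> r0" "r \<le> 1 / real (Suc n)" using r0 unfolding r_def by auto
  define q where "q = (a, U \<inter> (\<Union>x\<in>a. ball x r))"
  have "q \<in> PG G" unfolding q_def PG_def using a r by auto
  moreover have "\<forall>x\<in>a. \<forall>y\<in>a. x \<noteq> y \<longrightarrow> (cball x r \<times> cball y r) \<inter> G = {}"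
  proof (intro ballI impI)
    fix x y assume "x \<in> a" "y \<in> a" "x \<noteq> y"
    then have "(x, y) \<in> a \<times> a - Id" by auto
    from bspec[OF r0(2) this] r show "(cball x r \<times> cball y r) \<inter> G = {}" by auto
  qed
  ultimately have "q \<in> Dn G n" unfolding Dn_def q_def using r by auto
  moreover have "PG_le q p" unfolding PG_le_def q_def aU by auto
  ultimately show "\<exists>q\<in>Dn G n. PG_le q p" by blast
qed

lemma K_sub:
  assumes "PG_filter G F" "q \<in> F"
  shows "K_gen F \<subseteq> closure (snd q)"
proof -
  have "fst p \<subseteq> snd q" if "p \<in> F" for p
  proof -
    have sub: "F \<subseteq> PG G" using assms(1) unfolding PG_filter_def by (elim conjE)
    have dir: "\<forall>p\<in>F. \<forall>q\<in>F. \<exists>r\<in>F. PG_le r p \<and> PG_le r q"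
      using assms(1) unfolding PG_filter_def by (elim conjE)
    have "\<exists>r\<in>F. PG_le r p \<and> PG_le r q" using bspec[OF bspec[OF dir that] assms(2)] .
    then obtain r where r: "r \<in> F" "PG_le r p" "PG_le r q" by (elim bexE conjE)
    have "r \<in> PG G" using r(1) sub by (rule rev_subsetD)
    then have "fst r \<subseteq> snd r" unfolding PG_def by (cases r) simp
    then show ?thesis using r(2,3) unfolding PG_le_def by (meson order_trans)
  qed
  then have "(\<Union>p\<in>F. fst p) \<subseteq> snd q" by (rule UN_least)
  then show ?thesis unfolding K_gen_def by (rule closure_mono)
qed

lemma K_sub2:
  fixes G :: "('a::metric_space \<times> 'a) set"
  assumes "PG_filter G F" "q \<in> F" "finite (fst q)" "snd q \<subseteq> (\<Union>x\<in>fst q. ball x r)"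
  shows "K_gen F \<subseteq> (\<Union>x\<in>fst q. cball x r)"
proof -
  have "closure (snd q) \<subseteq> (\<Union>x\<in>fst q. cball x r)"
  proof (rule closure_minimal)
    have "(\<Union>x\<in>fst q. ball x r) \<subseteq> (\<Union>x\<in>fst q. cball x r)"
      by (rule SUP_mono'[OF ball_subset_cball])
    then show "snd q \<subseteq> (\<Union>x\<in>fst q. cball x r)" using assms(4) by blast
    show "closed (\<Union>x\<in>fst q. cball x r)" using assms(3) by (intro closed_UN) auto
  qed
  with K_sub[OF assms(1,2)] show ?thesis by (rule order_trans)
qed

lemma compact_part:
  fixes K :: "'a::polish_space set"
  assumes "closed K"
    and key: "\<And>n. \<exists>Q r. finite Q \<and> r > 0 \<and> r \<le> 1 / real (Suc n) \<and> K \<subseteq> (\<Union>x\<in>Q. cball x r)"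
  shows "compact K"
proof -
  have tb: "\<exists>k. finite k \<and> K \<subseteq> (\<Union>x\<in>k. ball x e)" if e: "e > 0" for e :: real
  proof -
  obtain n where n: "1 / real (Suc n) < e" by (rule nat_approx_posE[OF e])
  obtain Q r where qr: "finite Q" "r > 0" "r \<le> 1 / real (Suc n)" "K \<subseteq> (\<Union>x\<in>Q. cball x r)"
    using key[of n] by (elim exE conjE) (rule that; assumption)
  have "cball x r \<subseteq> ball x e" for x :: 'a
  proof
    fix z assume "z \<in> cball x r"
    then have "dist x z \<le> r" by (simp only: mem_cball)
    then have "dist x z < e" using qr(3) n by linarith
    then show "z \<in> ball x e" by (simp only: mem_ball)
  qed
  then have "(\<Union>x\<in>Q. cball x r) \<subseteq> (\<Union>x\<in>Q. ball x e)"
    by (simp add: SUP_mono')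
  then have "K \<subseteq> (\<Union>x\<in>Q. ball x e)" using qr(4) by (rule order_trans[rotated])
  then show "\<exists>k. finite k \<and> K \<subseteq> (\<Union>x\<in>k. ball x e)" using qr(1) by (intro exI[of _ Q] conjI)
  qed
  have "complete K" using assms(1) by (simp only: complete_eq_closed)
  then show ?thesis unfolding compact_eq_totally_bounded using tb by (intro conjI allI impI)
qed
lemma anticlique_part:
  fixes K :: "'a::metric_space set"
  assumes key0: "\<forall>n. \<exists>Q r. r > 0 \<and> r \<le> 1 / real (Suc n) \<and> K \<subseteq> (\<Union>x\<in>Q. cball x r) \<and>
      (\<forall>x\<in>Q. \<forall>y\<in>Q. x \<noteq> y \<longrightarrow> (cball x r \<times> cball y r) \<inter> G = {})"
    and xy: "x \<in> K" "y \<in> K" "x \<noteq> y" "(x, y) \<in> G"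
  shows False
proof -
  have "dist x y / 2 > 0" using xy by auto
  then obtain n where n: "1 / real (Suc n) < dist x y / 2" by (rule nat_approx_posE)
  obtain Q r where qr: "r > 0" "r \<le> 1 / real (Suc n)" "K \<subseteq> (\<Union>x\<in>Q. cball x r)"
    "\<forall>x\<in>Q. \<forall>y\<in>Q. x \<noteq> y \<longrightarrow> (cball x r \<times> cball y r) \<inter> G = {}"
    using spec[OF key0, of n] by (elim exE conjE) (rule that; assumption)
  obtain a where a: "a \<in> Q" "x \<in> cball a r" using qr(3) xy(1) by blast
  obtain b where b: "b \<in> Q" "y \<in> cball b r" using qr(3) xy(2) by blast
  show False
  proof (cases "a = b")
    case True
    have "dist x y \<le> dist a x + dist a y" by (rule dist_triangle3)
    also have "\<dots> \<le> 2 * r" using a b True by simp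
    finally show False using n qr(2) by linarith
  next
    case False
    then have "(cball a r \<times> cball b r) \<inter> G = {}" using qr(4) a(1) b(1) by blast
    moreover have "(x, y) \<in> cball a r \<times> cball b r" using a(2) b(2) by (rule SigmaI)
    ultimately show False using xy(4) by blast
  qed
qed
theorem proposition2p2:
  fixes G :: "('a::polish_space \<times> 'a) set"
  assumes "closed_graph G"
  shows "PG_forces G (\<lambda>K. compact K \<and> anticlique G K)"
  unfolding PG_forces_def
proof (intro exI[of _ "range (Dn G)"] conjI allI impI ballI)
  show "countable (range (Dn G))" by auto
  fix D assume "D \<in> range (Dn G)"
  then show "PG_dense G D" using Dn_dense[OF assms] by auto
next
  fix F assume F: "PG_filter G F \<and> (\<forall>D\<in>range (Dn G). F \<inter> D \<noteq> {})"
  have key: "\<exists>q r. q \<in> F \<and> finite (fst q) \<and> r > 0 \<and> r \<le> 1 / real (Suc n) \<and>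
      K_gen F \<subseteq> (\<Union>x\<in>fst q. cball x r) \<and>
      (\<forall>x\<in>fst q. \<forall>y\<in>fst q. x \<noteq> y \<longrightarrow> (cball x r \<times> cball y r) \<inter> G = {})" for n
  proof -
    have "Dn G n \<in> range (Dn G)" by (rule rangeI)
    then have "F \<inter> Dn G n \<noteq> {}" using F by (elim conjE) (rule bspec)
    then obtain q where q: "q \<in> F" "q \<in> Dn G n" by (meson IntE ex_in_conv)
    have "q \<in> PG G \<and> (\<exists>r>0. r \<le> 1 / real (Suc n) \<and> snd q \<subseteq> (\<Union>x\<in>fst q. ball x r) \<and>
      (\<forall>x\<in>fst q. \<forall>y\<in>fst q. x \<noteq> y \<longrightarrow> (cball x r \<times> cball y r) \<inter> G = {}))"
      using q(2) unfolding Dn_def by (rule CollectD)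
    then obtain r where r: "r > 0" "r \<le> 1 / real (Suc n)" "snd q \<subseteq> (\<Union>x\<in>fst q. ball x r)"
      "\<forall>x\<in>fst q. \<forall>y\<in>fst q. x \<noteq> y \<longrightarrow> (cball x r \<times> cball y r) \<inter> G = {}"
      and qPG: "q \<in> PG G" by (elim conjE exE) (intro that; assumption)
    obtain a0 U0 where "q = (a0, U0)" by force
    then have fin: "finite (fst q)" using qPG unfolding PG_def by auto
    have K: "K_gen F \<subseteq> (\<Union>x\<in>fst q. cball x r)" using K_sub2[OF conjunct1[OF F] q(1) fin r(3)] .
    show ?thesis
      apply (rule exI[of _ q], rule exI[of _ r])
      using q(1) fin r(1,2,4) K by (intro conjI)
  qed
  have ck: "\<exists>Q r. finite Q \<and> r > 0 \<and> r \<le> 1 / real (Suc n) \<and> K_gen F \<subseteq> (\<Union>x\<in>Q. cball x r)" for n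
  proof -
    obtain q r where qr: "q \<in> F" "finite (fst q)" "r > 0" "r \<le> 1 / real (Suc n)"
      "K_gen F \<subseteq> (\<Union>x\<in>fst q. cball x r)"
      "\<forall>x\<in>fst q. \<forall>y\<in>fst q. x \<noteq> y \<longrightarrow> (cball x r \<times> cball y r) \<inter> G = {}"
      using key[of n] by (elim exE conjE) (rule that; assumption)
    show ?thesis
      apply (rule exI[of _ "fst q"], rule exI[of _ r])
      using qr(2-5) by (intro conjI)
  qed
  have ak: "\<exists>Q r. r > 0 \<and> r \<le> 1 / real (Suc n) \<and> K_gen F \<subseteq> (\<Union>x\<in>Q. cball x r) \<and>
      (\<forall>x\<in>Q. \<forall>y\<in>Q. x \<noteq> y \<longrightarrow> (cball x r \<times> cball y r) \<inter> G = {})" for n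
  proof -
    obtain q r where qr: "q \<in> F" "finite (fst q)" "r > 0" "r \<le> 1 / real (Suc n)"
      "K_gen F \<subseteq> (\<Union>x\<in>fst q. cball x r)"
      "\<forall>x\<in>fst q. \<forall>y\<in>fst q. x \<noteq> y \<longrightarrow> (cball x r \<times> cball y r) \<inter> G = {}"
      using key[of n] by (elim exE conjE) (rule that; assumption)
    show ?thesis
      apply (rule exI[of _ "fst q"], rule exI[of _ r])
      using qr(3-6) by (intro conjI)
  qed
  have cl: "closed (K_gen F)" unfolding K_gen_def by (rule closed_closure)
  have c: "compact (K_gen F)" by (rule compact_part[OF cl ck])
  have ak': "\<forall>n. \<exists>Q r. r > 0 \<and> r \<le> 1 / real (Suc n) \<and> K_gen F \<subseteq> (\<Union>x\<in>Q. cball x r) \<and>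
      (\<forall>x\<in>Q. \<forall>y\<in>Q. x \<noteq> y \<longrightarrow> (cball x r \<times> cball y r) \<inter> G = {})"
    by (rule allI) (rule ak)
  have a: "anticlique G (K_gen F)" unfolding anticlique_def
  proof (intro ballI impI notI)
    fix x y assume xy: "x \<in> K_gen F" "y \<in> K_gen F" "x \<noteq> y" "(x, y) \<in> G"
    show False by (rule anticlique_part[OF ak' xy])
  qed
  show "compact (K_gen F)" by (rule c)
  show "anticlique G (K_gen F)" by (rule a)
qed

end
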